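(* Let $(a_n)_{n=1}^N\in\mathcal A_1$ and let $\{\mathcal P_n\}_{n=1}^N$ be a sequence of pyramids. For any partition $\{N_k\}_{k=1}^M$, $M\in\overline{\mathbb N}$, of $[N]$ into nonempty pairwise disjoint subsets, setting $\alpha_k:=\sum_{n\in N_k}a_n>0$, we have $$\sum_{n=1}^N\mathcal P_n^{a_n}=\sum_{k=1}^M\Big(\sum_{n\in N_k}\mathcal P_n^{a_n/\alpha_k}\Big)^{\alpha_k}.$$
   Context: An mm-space is a triple $(X,d_X,\mu_X)$ with $(X,d_X)$ complete separable metric and $\mu_X$ a Borel probability measure; $\mathcal X$ is the set of mm-isomorphism classes. $Y\prec X$ means there is a 1-Lipschitz $f:X\to Y$ with $f_*\mu_X=\mu_Y$. The box distance $\square(X,Y)$ is the infimum of $\max\{\operatorname{dis}(S),1-\pi(S)\}$ over couplings $\pi$ of $\mu_X,\mu_Y$ and Borel $S\subset X\times Y$, $\operatorname{dis}(S)=\sup\{|d_X(x,x')-d_Y(y,y')|:(x,y),(x',y')\in S\}$. A pyramid is a nonempty box-closed subset of $\mathcal X$ closed downward under $\prec$ and directed. $\overline{\mathbb N}=\mathbb N\cup\{\infty\}$, $[N]=\{1,\dots,N\}$ or $\mathbb N$. $\mathcal A_1$: sequences $(a_n)_{n=1}^N$ with $a_n\in(0,1]$, $\sum a_n=1$. For a countable index set $I$, weights $(c_i)_{i\in I}$ in $(0,1]$ with $\sum_ic_i=1$ and pyramids $\mathcal P_i$, the direct sum $\sum_{i\in I}\mathcal P_i^{c_i}$ is the set of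 $X\in\mathcal X$ for which there exist $X_i\in\mathcal P_i$ and 1-Lipschitz $f_i:X_i\to X$ with $\mu_X=\sum_ic_i(f_i)_*\mu_{X_i}$; it is a pyramid. *)

theory Defs
  imports "HOL-Analysis.Analysis" "HOL-Probability.Probability" "HOL-Library.Extended_Nat"
begin

text \<open>Every complete separable metric space has cardinality
  at most the continuum, so every mm-space is (up to mm-isomorphism) represented by a metric
  on a subset of the reals. An mm-space is a pair (d, mu): the carrier is space mu, the metric
  is d restricted to it, and mu is a Borel probability measure.\<close>

type_synonym mm = "(real \<Rightarrow> real \<Rightarrow> real) \<times> real measure"

definition mmd :: "mm \<Rightarrow> real \<Rightarrow> real \<Rightarrow> real" where "mmd X = fst X"
definition mmu :: "mm \<Rightarrow> real measure" where "mmu X = snd X"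
definition mms :: "mm \<Rightarrow> real set" where "mms X = space (mmu X)"

definition mm_space :: "mm \<Rightarrow> bool" where
  "mm_space X \<longleftrightarrow>
     Metric_space (mms X) (mmd X) \<and>
     Metric_space.mcomplete (mms X) (mmd X) \<and>
     separable_space (Metric_space.mtopology (mms X) (mmd X)) \<and>
     sets (mmu X) = sigma_sets (mms X) {U. openin (Metric_space.mtopology (mms X) (mmd X)) U} \<and>
     prob_space (mmu X)"

definition supp :: "mm \<Rightarrow> real set" where
  "supp X = {x \<in> mms X. \<forall>r>0. measure (mmu X) (Metric_space.mball (mms X) (mmd X) x r) > 0}"

definition mm_iso :: "mm \<Rightarrow> mm \<Rightarrow> bool" where
  "mm_iso X Y \<longleftrightarrow> (\<exists>f. bij_betw f (supp X) (supp Y) \<and>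
      (\<forall>x\<in>supp X. \<forall>x'\<in>supp X. mmd Y (f x) (f x') = mmd X x x') \<and>
      (\<forall>A\<in>sets (mmu Y). measure (mmu Y) A = measure (mmu X) (f -` A \<inter> supp X)))"

definition one_lip :: "mm \<Rightarrow> mm \<Rightarrow> (real \<Rightarrow> real) \<Rightarrow> bool" where
  "one_lip X Y f \<longleftrightarrow> f \<in> mms X \<rightarrow> mms Y \<and>
      (\<forall>x\<in>mms X. \<forall>x'\<in>mms X. mmd Y (f x) (f x') \<le> mmd X x x')"

definition push_eq :: "mm \<Rightarrow> mm \<Rightarrow> (real \<Rightarrow> real) \<Rightarrow> bool" where
  "push_eq X Y f \<longleftrightarrow> (\<forall>A\<in>sets (mmu Y). measure (mmu Y) A = measure (mmu X) (f -` A \<inter> mms X))"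

definition lip_dom :: "mm \<Rightarrow> mm \<Rightarrow> bool" (infix "\<prec>\<^sub>L" 50) where
  "Y \<prec>\<^sub>L X \<longleftrightarrow> (\<exists>X' Y' f. mm_space X' \<and> mm_space Y' \<and> mm_iso X X' \<and> mm_iso Y Y' \<and>
       one_lip X' Y' f \<and> push_eq X' Y' f)"

definition coupling :: "mm \<Rightarrow> mm \<Rightarrow> (real \<times> real) measure \<Rightarrow> bool" where
  "coupling X Y \<pi> \<longleftrightarrow> prob_space \<pi> \<and> sets \<pi> = sets (mmu X \<Otimes>\<^sub>M mmu Y) \<and>
      distr \<pi> (mmu X) fst = mmu X \<and> distr \<pi> (mmu Y) snd = mmu Y"

definition dis :: "mm \<Rightarrow> mm \<Rightarrow> (real \<times> real) set \<Rightarrow> ereal" where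
  "dis X Y S = (SUP p\<in>S. SUP q\<in>S. ereal \<bar>mmd X (fst p) (fst q) - mmd Y (snd p) (snd q)\<bar>)"

definition box :: "mm \<Rightarrow> mm \<Rightarrow> ereal" where
  "box X Y = Inf {max (dis X Y S) (ereal (1 - measure \<pi> S)) | \<pi> S.
                  coupling X Y \<pi> \<and> S \<in> sets \<pi>}"

definition box_closed :: "mm set \<Rightarrow> bool" where
  "box_closed P \<longleftrightarrow> (\<forall>X. mm_space X \<longrightarrow> (\<forall>e>0. \<exists>Y\<in>P. box X Y < ereal e) \<longrightarrow> X \<in> P)"

text \<open>Pyramids (as isomorphism-closed sets of representatives).\<close>
definition pyramid :: "mm set \<Rightarrow> bool" where
  "pyramid P \<longleftrightarrow> P \<subseteq> {X. mm_space X} \<and> P \<noteq> {} \<and> box_closed P \<and>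
     (\<forall>X\<in>P. \<forall>Y. mm_space Y \<longrightarrow> Y \<prec>\<^sub>L X \<longrightarrow> Y \<in> P) \<and>
     (\<forall>X\<in>P. \<forall>Y\<in>P. \<exists>Z\<in>P. X \<prec>\<^sub>L Z \<and> Y \<prec>\<^sub>L Z)"

definition direct_sum :: "'i set \<Rightarrow> ('i \<Rightarrow> real) \<Rightarrow> ('i \<Rightarrow> mm set) \<Rightarrow> mm set" where
  "direct_sum I c P = {X. mm_space X \<and>
     (\<exists>Xs f. (\<forall>i\<in>I. Xs i \<in> P i \<and> one_lip (Xs i) X (f i)) \<and>
        (\<forall>A\<in>sets (mmu X).
           ((\<lambda>i. c i * measure (mmu (Xs i)) (f i -` A \<inter> mms (Xs i))) has_sum measure (mmu X) A) I))}"

definition idx :: "enat \<Rightarrow> nat set" where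
  "idx N = {n. 1 \<le> n \<and> enat n \<le> N}"

end

theory Submission
  imports Defs
begin

lemma space_mmu: "space (mmu X) = mms X" by (simp add: mms_def)

lemma lip_preimage_open:
  assumes "Metric_space (mms X) (mmd X)" "Metric_space (mms Y) (mmd Y)" "one_lip X Y f"
    "openin (Metric_space.mtopology (mms Y) (mmd Y)) U"
  shows "openin (Metric_space.mtopology (mms X) (mmd X)) (f -` U \<inter> mms X)"
proof -
  interpret MX: Metric_space "mms X" "mmd X" by fact
  interpret MY: Metric_space "mms Y" "mmd Y" by fact
  from assms(4) have U: "U \<subseteq> mms Y" "\<forall>y\<in>U. \<exists>r>0. MY.mball y r \<subseteq> U"
    by (auto simp: MY.openin_mtopology)
  show ?thesis unfolding MX.openin_mtopology
  proof safe
    fix x assume x: "x \<in> mms X" "f x \<in> U"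
    then obtain r where r: "r>0" "MY.mball (f x) r \<subseteq> U" using U by blast
    have "MX.mball x r \<subseteq> f -` U \<inter> mms X"
    proof
      fix z assume "z \<in> MX.mball x r"
      hence z: "z \<in> mms X" "mmd X x z < r" by auto
      have "mmd Y (f x) (f z) \<le> mmd X x z" using assms(3) x z unfolding one_lip_def by auto
      moreover have "f z \<in> mms Y" "f x \<in> mms Y" using assms(3) x z unfolding one_lip_def by auto
      ultimately have "f z \<in> MY.mball (f x) r" using z by auto
      thus "z \<in> f -` U \<inter> mms X" using r z by auto
    qed
    thus "\<exists>r>0. MX.mball x r \<subseteq> f -` U \<inter> mms X" using r by blast
  qed
qed

lemma lip_measurable:
  assumes X: "mm_space X" and Y: "mm_space Y" and f: "one_lip X Y f"
  shows "f \<in> measurable (mmu X) (mmu Y)"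
proof (rule measurable_sigma_sets[where \<Omega>="mms Y" and
      A="{U. openin (Metric_space.mtopology (mms Y) (mmd Y)) U}"])
  show "sets (mmu Y) = sigma_sets (mms Y) {U. openin (Metric_space.mtopology (mms Y) (mmd Y)) U}"
    using Y by (simp add: mm_space_def)
  have MY: "Metric_space (mms Y) (mmd Y)" using Y by (simp add: mm_space_def)
  show "{U. openin (Metric_space.mtopology (mms Y) (mmd Y)) U} \<subseteq> Pow (mms Y)"
    using openin_subset[of "Metric_space.mtopology (mms Y) (mmd Y)"] Metric_space.topspace_mtopology[OF MY]
    by auto
  show "f \<in> space (mmu X) \<rightarrow> mms Y" using f by (simp add: one_lip_def space_mmu)
  fix U assume "U \<in> {U. openin (Metric_space.mtopology (mms Y) (mmd Y)) U}"
  then have "openin (Metric_space.mtopology (mms X) (mmd X)) (f -` U \<inter> mms X)"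
    using lip_preimage_open[of X Y f U] X Y f by (simp add: mm_space_def)
  then show "f -` U \<inter> space (mmu X) \<in> sets (mmu X)"
    using X unfolding mm_space_def space_mmu by (auto intro: sigma_sets.Basic)
qed

lemma has_sum_partition:
  fixes F :: "'a \<Rightarrow> real"
  assumes disj: "disjoint_family_on B K"
    and nonneg: "\<And>x. x \<in> (\<Union>k\<in>K. B k) \<Longrightarrow> F x \<ge> 0"
    and each: "\<And>k. k \<in> K \<Longrightarrow> (F has_sum g k) (B k)"
  shows "(F has_sum S) (\<Union>k\<in>K. B k) \<longleftrightarrow> (g has_sum S) K"
proof -
  have inj: "inj_on snd (Sigma K B)" using disj by (force simp: disjoint_family_on_def inj_on_def)
  have img: "snd ` Sigma K B = (\<Union>k\<in>K. B k)" by force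
  have "(F has_sum S) (\<Union>k\<in>K. B k) \<longleftrightarrow> ((F \<circ> snd) has_sum S) (Sigma K B)"
    using has_sum_reindex[OF inj, of F S] img by simp
  also have "\<dots> \<longleftrightarrow> (g has_sum S) K"
  proof
    assume "((F \<circ> snd) has_sum S) (Sigma K B)"
    then show "(g has_sum S) K" by (rule has_sum_Sigma') (use each in auto)
  next
    assume g: "(g has_sum S) K"
    show "((F \<circ> snd) has_sum S) (Sigma K B)"
    proof (rule has_sum_SigmaI[where g=g])
      show "\<And>x. x\<in>K \<Longrightarrow> ((\<lambda>y. (F\<circ>snd)(x,y)) has_sum g x) (B x)" using each by auto
      show "(g has_sum S) K" by fact
      show "(F\<circ>snd) summable_on Sigma K B"
        by (rule summable_on_SigmaI[where g=g]) (use each g nonneg has_sum_imp_summable in auto)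
    qed
  qed
  finally show ?thesis .
qed

lemma mixture:
  fixes c :: "nat \<Rightarrow> real" and Q :: "nat \<Rightarrow> 'a measure" and Y :: "'a measure"
  assumes c: "\<And>n. n \<in> S \<Longrightarrow> c n \<ge> 0" "(c has_sum 1) S"
   and Q: "\<And>n. n \<in> S \<Longrightarrow> prob_space (Q n) \<and> sets (Q n) = sets Y"
  shows "\<exists>\<nu>. space \<nu> = space Y \<and> sets \<nu> = sets Y \<and> prob_space \<nu> \<and>
    (\<forall>A\<in>sets Y. measure \<nu> A = infsum (\<lambda>n. c n * measure (Q n) A) S)"
proof -
  define T where "T A = infsum (\<lambda>n. c n * measure (Q n) A) S" for A
  have hs: "((\<lambda>n. c n * measure (Q n) A) has_sum T A) S" for A
  proof -
    have "(\<lambda>n. c n * measure (Q n) A) summable_on S"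
    proof (rule summable_on_comparison_test[of c])
      show "c summable_on S" using c(2) has_sum_imp_summable by blast
      fix n assume n: "n \<in> S"
      have "measure (Q n) A \<le> 1" using Q[OF n] prob_space.prob_le_1 by blast
      then show "c n * measure (Q n) A \<le> c n" using c(1)[OF n] by (simp add: mult_left_le)
      show "0 \<le> c n * measure (Q n) A" using c(1)[OF n] by simp
    qed
    then show ?thesis unfolding T_def by (rule has_sum_infsum)
  qed
  have Tnn: "T A \<ge> 0" for A unfolding T_def by (rule infsum_nonneg) (use c(1) in simp)
  define \<nu> where "\<nu> = measure_of (space Y) (sets Y) (\<lambda>A. ennreal (T A))"
  have pos: "positive (sets Y) (\<lambda>A. ennreal (T A))"
    unfolding positive_def T_def by simp
  have ca: "countably_additive (sets Y) (\<lambda>A. ennreal (T A))"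
    unfolding countably_additive_def
  proof (intro allI impI)
    fix A :: "nat \<Rightarrow> 'a set"
    assume A: "range A \<subseteq> sets Y" "disjoint_family A" "\<Union> (range A) \<in> sets Y"
    define F where "F p = c (fst p) * measure (Q (fst p)) (A (snd p))" for p
    have inner: "((\<lambda>i. F (n, i)) has_sum (c n * measure (Q n) (\<Union> (range A)))) UNIV" if n: "n \<in> S" for n
    proof -
      have fm: "finite_measure (Q n)" using Q[OF n] by (simp add: prob_space_def)
      have "(\<lambda>i. measure (Q n) (A i)) sums measure (Q n) (\<Union> (range A))"
        by (rule finite_measure.finite_measure_UNION[OF fm]) (use A Q[OF n] in auto)
      then have "((\<lambda>i. measure (Q n) (A i)) has_sum measure (Q n) (\<Union> (range A))) UNIV"
        by (rule sums_nonneg_imp_has_sum) simp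
      then show ?thesis unfolding F_def by (simp add: has_sum_cmult_right)
    qed
    have "(F has_sum T (\<Union> (range A))) (S \<times> UNIV)"
    proof (rule has_sum_SigmaI[OF inner hs])
      show "F summable_on S \<times> UNIV"
      proof (rule summable_on_SigmaI[OF inner])
        show "(\<lambda>n. c n * measure (Q n) (\<Union> (range A))) summable_on S"
          using hs has_sum_imp_summable by blast
        show "0 \<le> F (x, y)" if "x \<in> S" for x y
          using c(1)[OF that] by (simp add: F_def)
      qed
    qed
    then have "((\<lambda>(i,n). F (n,i)) has_sum T (\<Union> (range A))) (UNIV \<times> S)"
      by (rule has_sum_swap[THEN iffD1])
    then have "((\<lambda>i. T (A i)) has_sum T (\<Union> (range A))) UNIV"
    proof (rule has_sum_Sigma')
      fix i :: nat
      show "((\<lambda>n. (\<lambda>(i,n). F (n,i)) (i, n)) has_sum T (A i)) S"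
        using hs[of "A i"] by (simp add: F_def)
    qed
    then have "(\<lambda>i. T (A i)) sums T (\<Union> (range A))" by (rule has_sum_imp_sums)
    then show "(\<Sum>i. ennreal (T (A i))) = ennreal (T (\<Union> (range A)))"
      by (rule suminf_ennreal_eq[rotated]) (rule Tnn)
  qed
  have em: "emeasure \<nu> A = ennreal (T A)" if "A \<in> sets Y" for A
    unfolding \<nu>_def by (rule emeasure_measure_of_sigma[OF sets.sigma_algebra_axioms pos ca that])
  have sp: "space \<nu> = space Y" unfolding \<nu>_def by (simp add: space_measure_of_conv)
  have st: "sets \<nu> = sets Y" unfolding \<nu>_def
    by (simp add: sets_measure_of[OF sets.space_closed] sets.sigma_sets_eq)
  have "T (space Y) = infsum c S"
    unfolding T_def
  proof (rule infsum_cong)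
    fix n assume n: "n \<in> S"
    have "space (Q n) = space Y" using Q[OF n] sets_eq_imp_space_eq by blast
    then have "measure (Q n) (space Y) = 1" using Q[OF n] prob_space.prob_space by metis
    then show "c n * measure (Q n) (space Y) = c n" by simp
  qed
  also have "\<dots> = 1" using c(2) by (rule infsumI)
  finally have T1: "T (space Y) = 1" .
  have "prob_space \<nu>"
    by (rule prob_spaceI) (simp add: sp em T1)
  moreover have "\<forall>A\<in>sets Y. measure \<nu> A = T A"
    using em Tnn by (simp add: measure_def)
  ultimately show ?thesis using sp st unfolding T_def by blast
qed


lemma one_lip_comp:
  assumes "one_lip X Y f" "one_lip Y Z g"
  shows "one_lip X Z (g \<circ> f)"
  unfolding one_lip_def
proof (intro conjI ballI)
  show "g \<circ> f \<in> mms X \<rightarrow> mms Z" using assms unfolding one_lip_def by auto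
  fix x x' assume x: "x \<in> mms X" "x' \<in> mms X"
  then have fx: "f x \<in> mms Y" "f x' \<in> mms Y" using assms(1) unfolding one_lip_def by auto
  have "mmd Z (g (f x)) (g (f x')) \<le> mmd Y (f x) (f x')" using assms(2) fx unfolding one_lip_def by blast
  also have "\<dots> \<le> mmd X x x'" using assms(1) x unfolding one_lip_def by blast
  finally show "mmd Z ((g \<circ> f) x) ((g \<circ> f) x') \<le> mmd X x x'" by simp
qed

theorem proposition3p22:
  fixes N M :: enat and a :: "nat \<Rightarrow> real" and P :: "nat \<Rightarrow> mm set"
    and Nk :: "nat \<Rightarrow> nat set"
  assumes a_pos: "\<forall>n\<in>idx N. 0 < a n \<and> a n \<le> 1"
    and a_sum: "(a has_sum 1) (idx N)"
    and pyr: "\<forall>n\<in>idx N. pyramid (P n)"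
    and part_ne: "\<forall>k\<in>idx M. Nk k \<noteq> {}"
    and part_disj: "\<forall>k\<in>idx M. \<forall>l\<in>idx M. k \<noteq> l \<longrightarrow> Nk k \<inter> Nk l = {}"
    and part_cover: "(\<Union>k\<in>idx M. Nk k) = idx N"
  shows "direct_sum (idx N) a P =
         direct_sum (idx M) (\<lambda>k. infsum a (Nk k))
           (\<lambda>k. direct_sum (Nk k) (\<lambda>n. a n / infsum a (Nk k)) P)"
proof -
  define I where "I = idx N"
  define J where "J = idx M"
  define \<alpha> where "\<alpha> k = infsum a (Nk k)" for k
  have a_nn: "\<And>n. n \<in> I \<Longrightarrow> 0 \<le> a n" using a_pos by (auto simp: I_def less_imp_le)
  have sub: "\<And>k. k \<in> J \<Longrightarrow> Nk k \<subseteq> I" using part_cover unfolding I_def J_def by blast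
  have a_summ: "a summable_on I" using a_sum has_sum_imp_summable unfolding I_def by blast
  have a_sumk: "(a has_sum \<alpha> k) (Nk k)" if k: "k \<in> J" for k
    unfolding \<alpha>_def by (rule has_sum_infsum, rule summable_on_subset_banach[OF a_summ sub[OF k]])
  have \<alpha>_pos: "\<alpha> k > 0" if k: "k \<in> J" for k
  proof (rule ccontr)
    assume "\<not> \<alpha> k > 0"
    then have le: "infsum a (Nk k) \<le> 0" by (simp add: \<alpha>_def)
    obtain n where n: "n \<in> Nk k" using part_ne k unfolding J_def by blast
    have "a n = 0"
      by (rule nonneg_infsum_le_0D[OF le]) (use a_sumk[OF k] has_sum_imp_summable a_nn sub[OF k] n in auto)
    moreover have "a n > 0" using a_pos sub[OF k] n unfolding I_def by blast
    ultimately show False by simp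
  qed
  have disj: "disjoint_family_on Nk J" using part_disj unfolding disjoint_family_on_def J_def by blast
  have cover: "(\<Union>k\<in>J. Nk k) = I" using part_cover unfolding I_def J_def by simp
  have "direct_sum I a P = direct_sum J \<alpha> (\<lambda>k. direct_sum (Nk k) (\<lambda>n. a n / \<alpha> k) P)"
  proof (intro set_eqI iffI)
    fix X assume "X \<in> direct_sum I a P"
    then obtain Xs f where X: "mm_space X"
      and Xs: "\<forall>n\<in>I. Xs n \<in> P n \<and> one_lip (Xs n) X (f n)"
      and meas: "\<forall>A\<in>sets (mmu X). ((\<lambda>n. a n * measure (mmu (Xs n)) (f n -` A \<inter> mms (Xs n)))
                    has_sum measure (mmu X) A) I"
      unfolding direct_sum_def by blast
    have XsM: "mm_space (Xs n)" if "n \<in> I" for n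
      using pyr Xs that unfolding pyramid_def I_def by blast
    have fmeas: "f n \<in> measurable (mmu (Xs n)) (mmu X)" if "n \<in> I" for n
      using lip_measurable[OF XsM[OF that] X] Xs that by blast
    define h where "h n A = measure (mmu (Xs n)) (f n -` A \<inter> mms (Xs n))" for n A
    have "\<forall>k\<in>J. \<exists>\<nu>. space \<nu> = space (mmu X) \<and> sets \<nu> = sets (mmu X) \<and> prob_space \<nu> \<and>
      (\<forall>A\<in>sets (mmu X). measure \<nu> A = infsum (\<lambda>n. a n / \<alpha> k * h n A) (Nk k))"
    proof
      fix k assume k: "k \<in> J"
      have "\<exists>\<nu>. space \<nu> = space (mmu X) \<and> sets \<nu> = sets (mmu X) \<and> prob_space \<nu> \<and>
        (\<forall>A\<in>sets (mmu X). measure \<nu> A = infsum (\<lambda>n. a n / \<alpha> k *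
            measure (distr (mmu (Xs n)) (mmu X) (f n)) A) (Nk k))"
      proof (rule mixture)
        show "0 \<le> a n / \<alpha> k" if "n \<in> Nk k" for n
          using a_nn sub[OF k] that \<alpha>_pos[OF k] by auto
        show "((\<lambda>n. a n / \<alpha> k) has_sum 1) (Nk k)"
          using has_sum_divide_const[OF a_sumk[OF k], of "\<alpha> k"] \<alpha>_pos[OF k] by simp
        show "prob_space (distr (mmu (Xs n)) (mmu X) (f n)) \<and> sets (distr (mmu (Xs n)) (mmu X) (f n)) = sets (mmu X)"
          if "n \<in> Nk k" for n
        proof -
          have n: "n \<in> I" using sub[OF k] that by blast
          have "prob_space (mmu (Xs n))" using XsM[OF n] by (simp add: mm_space_def)
          then show ?thesis using prob_space.prob_space_distr[OF _ fmeas[OF n]] by simp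
        qed
      qed
      then obtain \<nu> where \<nu>: "space \<nu> = space (mmu X)" "sets \<nu> = sets (mmu X)" "prob_space \<nu>"
        "\<forall>A\<in>sets (mmu X). measure \<nu> A = infsum (\<lambda>n. a n / \<alpha> k *
            measure (distr (mmu (Xs n)) (mmu X) (f n)) A) (Nk k)" by blast
      have "\<forall>A\<in>sets (mmu X). measure \<nu> A = infsum (\<lambda>n. a n / \<alpha> k * h n A) (Nk k)"
      proof
        fix A assume A: "A \<in> sets (mmu X)"
        have "infsum (\<lambda>n. a n / \<alpha> k * measure (distr (mmu (Xs n)) (mmu X) (f n)) A) (Nk k)
            = infsum (\<lambda>n. a n / \<alpha> k * h n A) (Nk k)"
        proof (rule infsum_cong)
          fix n assume "n \<in> Nk k"
          then have n: "n \<in> I" using sub[OF k] by blast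
          show "a n / \<alpha> k * measure (distr (mmu (Xs n)) (mmu X) (f n)) A = a n / \<alpha> k * h n A"
            using measure_distr[OF fmeas[OF n] A] by (simp add: h_def space_mmu)
        qed
        then show "measure \<nu> A = infsum (\<lambda>n. a n / \<alpha> k * h n A) (Nk k)" using \<nu>(4) A by simp
      qed
      then show "\<exists>\<nu>. space \<nu> = space (mmu X) \<and> sets \<nu> = sets (mmu X) \<and> prob_space \<nu> \<and>
        (\<forall>A\<in>sets (mmu X). measure \<nu> A = infsum (\<lambda>n. a n / \<alpha> k * h n A) (Nk k))"
        using \<nu> by blast
    qed
    from bchoice[OF this] obtain \<nu> where \<nu>': "\<forall>k\<in>J. space (\<nu> k) = space (mmu X) \<and> sets (\<nu> k) = sets (mmu X) \<and> prob_space (\<nu> k) \<and>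
      (\<forall>A\<in>sets (mmu X). measure (\<nu> k) A = infsum (\<lambda>n. a n / \<alpha> k * h n A) (Nk k))"
      by blast
    have \<nu>: "space (\<nu> k) = space (mmu X) \<and> sets (\<nu> k) = sets (mmu X) \<and> prob_space (\<nu> k) \<and>
      (\<forall>A\<in>sets (mmu X). measure (\<nu> k) A = infsum (\<lambda>n. a n / \<alpha> k * h n A) (Nk k))" if "k \<in> J" for k
      using \<nu>' that by blast
    define Ys where "Ys k = (mmd X, \<nu> k)" for k
    have mmsY: "mms (Ys k) = mms X" if "k \<in> J" for k
      using \<nu>[OF that] by (simp add: Ys_def mms_def mmu_def)
    have mmdY: "mmd (Ys k) = mmd X" for k by (simp add: Ys_def mmd_def)
    have mmuY: "mmu (Ys k) = \<nu> k" for k by (simp add: Ys_def mmu_def)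
    have YsM: "mm_space (Ys k)" if k: "k \<in> J" for k
      using X \<nu>[OF k] unfolding mm_space_def mmsY[OF k] mmdY mmuY by simp
    have summ: "(\<lambda>n. a n * h n A) summable_on Nk k" if "k \<in> J" "A \<in> sets (mmu X)" for k A
      using summable_on_subset_banach[OF has_sum_imp_summable[OF meas[rule_format, OF that(2)]] sub[OF that(1)]]
      by (simp add: h_def)
    show "X \<in> direct_sum J \<alpha> (\<lambda>k. direct_sum (Nk k) (\<lambda>n. a n / \<alpha> k) P)"
      unfolding direct_sum_def[of J] mem_Collect_eq
    proof (intro conjI exI[of _ Ys] exI[of _ "\<lambda>k. id"] ballI X)
      fix k assume k: "k \<in> J"
      show "one_lip (Ys k) X id" unfolding one_lip_def mmsY[OF k] mmdY by simp
      show "Ys k \<in> direct_sum (Nk k) (\<lambda>n. a n / \<alpha> k) P"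
        unfolding direct_sum_def mem_Collect_eq
      proof (rule conjI[OF YsM[OF k]], rule exI[of _ Xs], rule exI[of _ f], intro conjI ballI)
        fix n assume n: "n \<in> Nk k"
        then have nI: "n \<in> I" using sub[OF k] by blast
        show "Xs n \<in> P n" using Xs nI by blast
        show "one_lip (Xs n) (Ys k) (f n)" using Xs nI unfolding one_lip_def mmsY[OF k] mmdY by blast
      next
        fix A assume "A \<in> sets (mmu (Ys k))"
        then have A: "A \<in> sets (mmu X)" using \<nu>[OF k] by (simp add: mmuY)
        have "(\<lambda>n. (1 / \<alpha> k) * (a n * h n A)) summable_on Nk k"
          by (rule summable_on_cmult_right[OF summ[OF k A]])
        then have "(\<lambda>n. a n / \<alpha> k * h n A) summable_on Nk k" by simp
        then have "((\<lambda>n. a n / \<alpha> k * h n A) has_sum infsum (\<lambda>n. a n / \<alpha> k * h n A) (Nk k)) (Nk k)"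
          by (rule has_sum_infsum)
        moreover have "measure (\<nu> k) A = infsum (\<lambda>n. a n / \<alpha> k * h n A) (Nk k)"
          using \<nu>[OF k] A by blast
        ultimately have "((\<lambda>n. a n / \<alpha> k * h n A) has_sum measure (\<nu> k) A) (Nk k)" by simp
        then show "((\<lambda>i. a i / \<alpha> k * measure (mmu (Xs i)) (f i -` A \<inter> mms (Xs i)))
             has_sum measure (mmu (Ys k)) A) (Nk k)" by (simp add: h_def mmuY)
      qed
    next
      fix A assume A: "A \<in> sets (mmu X)"
      have Asub: "A \<subseteq> mms X" using sets.sets_into_space[OF A] by (simp add: space_mmu)
      have "((\<lambda>n. a n * h n A) has_sum measure (mmu X) A) (\<Union>k\<in>J. Nk k)"
        using meas A cover by (simp add: h_def)
      moreover have "((\<lambda>n. a n * h n A) has_sum infsum (\<lambda>n. a n * h n A) (Nk k)) (Nk k)" if "k \<in> J" for k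
        by (rule has_sum_infsum[OF summ[OF that A]])
      moreover have "0 \<le> a n * h n A" if "n \<in> (\<Union>k\<in>J. Nk k)" for n
        using a_nn[of n] that cover unfolding h_def by simp
      ultimately have hsJ: "((\<lambda>k. infsum (\<lambda>n. a n * h n A) (Nk k)) has_sum measure (mmu X) A) J"
        using has_sum_partition[OF disj, of "\<lambda>n. a n * h n A" "\<lambda>k. infsum (\<lambda>n. a n * h n A) (Nk k)"]
        by blast
      have eqk: "infsum (\<lambda>n. a n * h n A) (Nk k) = \<alpha> k * measure (mmu (Ys k)) (id -` A \<inter> mms (Ys k))"
        if k: "k \<in> J" for k
      proof -
        have "id -` A \<inter> mms (Ys k) = A" using Asub mmsY[OF k] by auto
        then have "\<alpha> k * measure (mmu (Ys k)) (id -` A \<inter> mms (Ys k)) = \<alpha> k * infsum (\<lambda>n. a n / \<alpha> k * h n A) (Nk k)"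
          using \<nu>[OF k] A by (simp add: mmuY)
        also have "\<dots> = infsum (\<lambda>n. \<alpha> k * (a n / \<alpha> k * h n A)) (Nk k)"
          by (rule infsum_cmult_right[symmetric]) (use summable_on_cmult_right[OF summ[OF k A], of "1 / \<alpha> k"] in simp)
        also have "\<dots> = infsum (\<lambda>n. a n * h n A) (Nk k)"
          using \<alpha>_pos[OF k] by (intro infsum_cong) simp
        finally show ?thesis by simp
      qed
      show "((\<lambda>k. \<alpha> k * measure (mmu (Ys k)) (id -` A \<inter> mms (Ys k))) has_sum measure (mmu X) A) J"
        by (rule has_sum_cong[THEN iffD1, OF _ hsJ]) (simp add: eqk)
    qed
  next
    fix X assume "X \<in> direct_sum J \<alpha> (\<lambda>k. direct_sum (Nk k) (\<lambda>n. a n / \<alpha> k) P)"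
    then obtain Ys g where X: "mm_space X"
      and Ys: "\<forall>k\<in>J. Ys k \<in> direct_sum (Nk k) (\<lambda>n. a n / \<alpha> k) P \<and> one_lip (Ys k) X (g k)"
      and meas: "\<forall>A\<in>sets (mmu X). ((\<lambda>k. \<alpha> k * measure (mmu (Ys k)) (g k -` A \<inter> mms (Ys k)))
                    has_sum measure (mmu X) A) J"
      unfolding direct_sum_def by blast
    have "\<forall>k\<in>J. \<exists>XS F. mm_space (Ys k) \<and> (\<forall>n\<in>Nk k. XS n \<in> P n \<and> one_lip (XS n) (Ys k) (F n)) \<and>
       (\<forall>B\<in>sets (mmu (Ys k)). ((\<lambda>n. a n / \<alpha> k * measure (mmu (XS n)) (F n -` B \<inter> mms (XS n)))
          has_sum measure (mmu (Ys k)) B) (Nk k))"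
      using Ys unfolding direct_sum_def by blast
    from bchoice[OF this] obtain XS where "\<forall>k\<in>J. \<exists>F. mm_space (Ys k) \<and> (\<forall>n\<in>Nk k. XS k n \<in> P n \<and> one_lip (XS k n) (Ys k) (F n)) \<and>
       (\<forall>B\<in>sets (mmu (Ys k)). ((\<lambda>n. a n / \<alpha> k * measure (mmu (XS k n)) (F n -` B \<inter> mms (XS k n)))
          has_sum measure (mmu (Ys k)) B) (Nk k))" by blast
    from bchoice[OF this] obtain F where XS': "\<forall>k\<in>J. mm_space (Ys k) \<and> (\<forall>n\<in>Nk k. XS k n \<in> P n \<and> one_lip (XS k n) (Ys k) (F k n)) \<and>
       (\<forall>B\<in>sets (mmu (Ys k)). ((\<lambda>n. a n / \<alpha> k * measure (mmu (XS k n)) (F k n -` B \<inter> mms (XS k n)))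
          has_sum measure (mmu (Ys k)) B) (Nk k))" by blast
    have XS: "mm_space (Ys k) \<and> (\<forall>n\<in>Nk k. XS k n \<in> P n \<and> one_lip (XS k n) (Ys k) (F k n)) \<and>
       (\<forall>B\<in>sets (mmu (Ys k)). ((\<lambda>n. a n / \<alpha> k * measure (mmu (XS k n)) (F k n -` B \<inter> mms (XS k n)))
          has_sum measure (mmu (Ys k)) B) (Nk k))" if "k \<in> J" for k
      using XS' that by blast
    define kk where "kk n = (THE k. k \<in> J \<and> n \<in> Nk k)" for n
    have kk: "kk n = k" if "k \<in> J" "n \<in> Nk k" for k n
      unfolding kk_def
    proof (rule the_equality)
      show "k \<in> J \<and> n \<in> Nk k" using that by blast
      fix l assume "l \<in> J \<and> n \<in> Nk l"
      then show "l = k" using that disj unfolding disjoint_family_on_def by blast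
    qed
    have kkI: "kk n \<in> J \<and> n \<in> Nk (kk n)" if nI: "n \<in> I" for n
    proof -
      obtain k where "k \<in> J" "n \<in> Nk k" using nI cover by blast
      then show ?thesis using kk by simp
    qed
    define Xs where "Xs n = XS (kk n) n" for n
    define f where "f n = g (kk n) \<circ> F (kk n) n" for n
    show "X \<in> direct_sum I a P"
      unfolding direct_sum_def mem_Collect_eq
    proof (intro conjI exI[of _ Xs] exI[of _ f] ballI X)
      fix n assume n: "n \<in> I"
      show "Xs n \<in> P n" using XS[OF conjunct1[OF kkI[OF n]]] kkI[OF n] by (simp add: Xs_def)
      show "one_lip (Xs n) X (f n)" unfolding Xs_def f_def
        by (rule one_lip_comp) (use XS[OF conjunct1[OF kkI[OF n]]] kkI[OF n] Ys in auto)
    next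
      fix A assume A: "A \<in> sets (mmu X)"
      have each: "((\<lambda>n. a n * measure (mmu (Xs n)) (f n -` A \<inter> mms (Xs n))) has_sum
          \<alpha> k * measure (mmu (Ys k)) (g k -` A \<inter> mms (Ys k))) (Nk k)" if k: "k \<in> J" for k
      proof -
        have YM: "mm_space (Ys k)" using XS[OF k] by blast
        have B: "g k -` A \<inter> mms (Ys k) \<in> sets (mmu (Ys k))"
          using measurable_sets[OF lip_measurable[OF YM X] A] Ys k by (simp add: space_mmu)
        have "((\<lambda>n. a n / \<alpha> k * measure (mmu (XS k n)) (F k n -` (g k -` A \<inter> mms (Ys k)) \<inter> mms (XS k n)))
          has_sum measure (mmu (Ys k)) (g k -` A \<inter> mms (Ys k))) (Nk k)"
          using XS[OF k] B by blast
        from has_sum_cmult_right[OF this, of "\<alpha> k"]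
        show ?thesis
        proof (rule has_sum_cong[THEN iffD1, rotated])
          fix n assume n: "n \<in> Nk k"
          have Fm: "F k n \<in> mms (XS k n) \<rightarrow> mms (Ys k)" using XS[OF k] n unfolding one_lip_def by blast
          have "F k n -` (g k -` A \<inter> mms (Ys k)) \<inter> mms (XS k n) = f n -` A \<inter> mms (Xs n)"
            using Fm kk[OF k n] unfolding f_def Xs_def by auto
          then show "\<alpha> k * (a n / \<alpha> k * measure (mmu (XS k n)) (F k n -` (g k -` A \<inter> mms (Ys k)) \<inter> mms (XS k n)))
            = a n * measure (mmu (Xs n)) (f n -` A \<inter> mms (Xs n))"
            using \<alpha>_pos[OF k] kk[OF k n] by (simp add: Xs_def)
        qed
      qed
      have "((\<lambda>n. a n * measure (mmu (Xs n)) (f n -` A \<inter> mms (Xs n))) has_sum measure (mmu X) A) (\<Union>k\<in>J. Nk k)"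
      proof (subst has_sum_partition[OF disj _ each])
        show "0 \<le> a n * measure (mmu (Xs n)) (f n -` A \<inter> mms (Xs n))" if "n \<in> (\<Union>k\<in>J. Nk k)" for n
          using a_nn[of n] that cover by simp
        show "((\<lambda>k. \<alpha> k * measure (mmu (Ys k)) (g k -` A \<inter> mms (Ys k))) has_sum measure (mmu X) A) J"
          using meas A by blast
      qed
      then show "((\<lambda>n. a n * measure (mmu (Xs n)) (f n -` A \<inter> mms (Xs n))) has_sum measure (mmu X) A) I"
        using cover by simp
    qed
  qed
  moreover have "\<alpha> = (\<lambda>k. infsum a (Nk k))" by (rule ext) (simp add: \<alpha>_def)
  ultimately show ?thesis by (simp add: I_def J_def)
qed

end
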